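(* If a graph $G$ contains a vertex of degree at least four that is contained in at most one cycle of $G$, then $G\notin\mathcal{G}^{\rm SSP}$.
   Context: All graphs are finite, simple, undirected. For a graph $G$ on $\{1,\ldots,n\}$, $\mathcal{S}(G)$ is the set of real symmetric $n\times n$ matrices $A=(a_{ij})$ with $a_{ij}\neq0$ iff $\{i,j\}\in E(G)$ for $i\neq j$ (diagonal arbitrary). A real symmetric $A$ has the strong spectral property (SSP) if the only real symmetric $X$ with $A\circ X=0$, $I\circ X=0$, $AX-XA=0$ is $X=0$ ($\circ$ = entrywise product). $\mathcal{G}^{\rm SSP}$ is the set of graphs $G$ such that every matrix in $\mathcal{S}(G)$ has the SSP. *)

theory Defs
  imports "HOL-Analysis.Analysis"
begin

definition simple_graph :: "('n::finite \<Rightarrow> 'n \<Rightarrow> bool) \<Rightarrow> bool" where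
  "simple_graph E \<longleftrightarrow> (\<forall>u v. E u v \<longleftrightarrow> E v u) \<and> (\<forall>v. \<not> E v v)"

definition degree :: "('n::finite \<Rightarrow> 'n \<Rightarrow> bool) \<Rightarrow> 'n \<Rightarrow> nat" where
  "degree E v = card {u. E v u}"

text \<open>A cycle of G, viewed as a subgraph (its edge set): given by a list of
k \<ge> 3 distinct vertices, consecutive ones (cyclically) adjacent.\<close>
definition cycle_edges :: "'n list \<Rightarrow> 'n set set" where
  "cycle_edges vs = {{vs ! i, vs ! ((i + 1) mod length vs)} | i. i < length vs}"

definition is_cycle :: "('n::finite \<Rightarrow> 'n \<Rightarrow> bool) \<Rightarrow> 'n set set \<Rightarrow> bool" where
  "is_cycle E C \<longleftrightarrow> (\<exists>vs. length vs \<ge> 3 \<and> distinct vs \<and>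
      (\<forall>i < length vs. E (vs ! i) (vs ! ((i + 1) mod length vs))) \<and>
      C = cycle_edges vs)"

definition cycles_through :: "('n::finite \<Rightarrow> 'n \<Rightarrow> bool) \<Rightarrow> 'n \<Rightarrow> 'n set set set" where
  "cycles_through E v = {C. is_cycle E C \<and> v \<in> \<Union>C}"

definition S_graph :: "('n::finite \<Rightarrow> 'n \<Rightarrow> bool) \<Rightarrow> (real^'n^'n) set" where
  "S_graph E = {A. transpose A = A \<and> (\<forall>i j. i \<noteq> j \<longrightarrow> (A $ i $ j \<noteq> 0 \<longleftrightarrow> E i j))}"

definition SSP :: "real^'n^'n \<Rightarrow> bool" where
  "SSP A \<longleftrightarrow> (\<forall>X::real^'n^'n. transpose X = X \<and> (\<forall>i j. A $ i $ j * X $ i $ j = 0)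
      \<and> (\<forall>i. X $ i $ i = 0) \<and> A ** X - X ** A = 0 \<longrightarrow> X = 0)"

definition G_SSP :: "('n::finite \<Rightarrow> 'n \<Rightarrow> bool) set" where
  "G_SSP = {E. simple_graph E \<and> (\<forall>A \<in> S_graph E. SSP A)}"

end

theory Submission
  imports Defs "HOL-Library.Transitive_Closure_Table"
begin

definition rG :: "('n \<Rightarrow> 'n \<Rightarrow> bool) \<Rightarrow> 'n \<Rightarrow> 'n \<Rightarrow> 'n \<Rightarrow> bool" where
  "rG E v a b \<longleftrightarrow> E a b \<and> a \<noteq> v \<and> b \<noteq> v"

lemma path_props:
  assumes "rtrancl_path r x xs y"
  shows "(\<forall>i<length xs. r ((x#xs)!i) (xs!i)) \<and> (xs \<noteq> [] \<longrightarrow> last xs = y)"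
  using assms
proof (induction rule: rtrancl_path.induct)
  case (base x)
  then show ?case by simp
next
  case (step x y ys z)
  have "\<forall>i<length (y#ys). r ((x#y#ys)!i) ((y#ys)!i)"
  proof (intro allI impI)
    fix i assume "i < length (y#ys)"
    then show "r ((x#y#ys)!i) ((y#ys)!i)"
      using step by (cases i) auto
  qed
  moreover have "last (y#ys) = z"
    using step by (cases ys) (auto elim: rtrancl_path.cases)
  ultimately show ?case by simp
qed

lemma cycle_from_path:
  fixes E :: "'n::finite \<Rightarrow> 'n \<Rightarrow> bool"
  assumes sg: "simple_graph E" and vx: "E v x" and vy: "E v y" and xy: "x \<noteq> y"
    and p: "rtrancl_path (rG E v) x xs y" and dist: "distinct (x#xs)"
  shows "is_cycle E (cycle_edges (v#x#xs)) \<and> v \<in> \<Union>(cycle_edges (v#x#xs))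
     \<and> {v,y} \<in> cycle_edges (v#x#xs)
     \<and> (\<forall>z. {v,z} \<in> cycle_edges (v#x#xs) \<longrightarrow> z = x \<or> z = y)"
proof -
  define vs where "vs = v#x#xs"
  define n where "n = length vs"
  from path_props[OF p] have adj: "\<forall>i<length xs. rG E v ((x#xs)!i) (xs!i)"
    and lst: "xs \<noteq> [] \<longrightarrow> last xs = y" by auto
  have xsne: "xs \<noteq> []" using p xy by (auto elim: rtrancl_path.cases)
  have sym: "\<And>a b. E a b \<longleftrightarrow> E b a" and irr: "\<And>a. \<not> E a a"
    using sg unfolding simple_graph_def by auto
  have xv: "x \<noteq> v" using vx irr by blast
  have "v \<notin> set xs"
  proof
    assume "v \<in> set xs"
    then obtain i where "i < length xs" "xs!i = v" by (auto simp: in_set_conv_nth)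
    with adj show False unfolding rG_def by auto
  qed
  hence dvs: "distinct vs" using dist xv unfolding vs_def by auto
  have n3: "n \<ge> 3" using xsne unfolding n_def vs_def by (cases xs) auto
  have lastvs: "vs ! (n - 1) = y"
    using lst xsne unfolding vs_def n_def by (simp add: last_conv_nth)
  have adjall: "\<forall>i<n. E (vs!i) (vs!((i+1) mod n))"
  proof (intro allI impI)
    fix i assume i: "i < n"
    show "E (vs!i) (vs!((i+1) mod n))"
    proof (cases "i = 0")
      case True
      then show ?thesis using vx n3 unfolding vs_def by simp
    next
      case False
      show ?thesis
      proof (cases "i = n - 1")
        case True
        then have "(i+1) mod n = 0" using n3 by simp
        then show ?thesis using True lastvs vy sym unfolding vs_def by simp
      next
        case False2: False
        then have "(i+1) mod n = i + 1" using i by simp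
        moreover obtain j where j: "i = Suc j" using \<open>i \<noteq> 0\<close> by (cases i) auto
        moreover have "j < length xs" using i False2 j unfolding n_def vs_def by simp
        ultimately show ?thesis using adj unfolding vs_def rG_def by auto
      qed
    qed
  qed
  have cyc: "is_cycle E (cycle_edges vs)"
    unfolding is_cycle_def using n3 dvs adjall unfolding n_def by blast
  have e0: "{v,x} \<in> cycle_edges vs"
    unfolding cycle_edges_def using n3 unfolding vs_def n_def
    by (auto intro!: exI[of _ 0])
  have ey: "{v,y} \<in> cycle_edges vs"
  proof -
    have "(n - 1 + 1) mod n = 0" using n3 by simp
    hence "{vs!(n-1), vs!((n-1+1) mod n)} = {v,y}" using lastvs unfolding vs_def by auto
    moreover have "n - 1 < length vs" using n3 unfolding n_def by simp
    ultimately show ?thesis unfolding cycle_edges_def n_def by blast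
  qed
  have uniq: "\<forall>z. {v,z} \<in> cycle_edges vs \<longrightarrow> z = x \<or> z = y"
  proof (intro allI impI)
    fix z assume "{v,z} \<in> cycle_edges vs"
    then obtain i where i: "i < n" and eq: "{v,z} = {vs!i, vs!((i+1) mod n)}"
      unfolding cycle_edges_def n_def by blast
    have v0: "vs!0 = v" unfolding vs_def by simp
    have imod: "(i+1) mod n < n" using n3 by simp
    have d01: "vs!1 \<noteq> v" unfolding vs_def using xv by simp
    have dlast: "y \<noteq> v" using vy irr by blast
    have "v = vs!i \<or> v = vs!((i+1) mod n)" using eq by (auto simp: doubleton_eq_iff)
    then show "z = x \<or> z = y"
    proof
      assume "v = vs!i"
      hence "i = 0" using nth_eq_iff_index_eq[OF dvs, of i 0] i n3 v0 unfolding n_def by force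
      hence "z = vs!1" using eq n3 v0 d01 by (auto simp: doubleton_eq_iff)
      then show ?thesis unfolding vs_def by auto
    next
      assume "v = vs!((i+1) mod n)"
      hence "(i+1) mod n = 0" using nth_eq_iff_index_eq[OF dvs, of "(i+1) mod n" 0] imod n3 v0
        unfolding n_def by force
      hence "i = n - 1" using i n3
        by (metis Suc_eq_plus1 Suc_lessI diff_Suc_1 mod_less zero_neq_one add_is_0)
      hence "z = y" using eq lastvs v0 dlast by (auto simp: doubleton_eq_iff)
      then show ?thesis by auto
    qed
  qed
  show ?thesis using cyc e0 ey uniq unfolding vs_def by blast
qed


lemma row_sum_zero:
  fixes E :: "'n::finite \<Rightarrow> 'n \<Rightarrow> bool" and A :: "real^'n^'n"
  assumes sg: "simple_graph E"
    and diag: "\<And>i. A$i$i = - real (card {k. E i k \<and> k \<noteq> v})"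
    and zero: "\<And>i j. i \<noteq> j \<Longrightarrow> \<not> E i j \<Longrightarrow> A$i$j = 0"
    and one: "\<And>i j. i \<noteq> v \<Longrightarrow> j \<noteq> v \<Longrightarrow> i \<noteq> j \<Longrightarrow> E i j \<Longrightarrow> A$i$j = 1"
    and vrow: "\<And>k. k \<in> S \<Longrightarrow> E v k \<Longrightarrow> A$v$k = (if k = b then 1 - real (card {k\<in>S. E v k}) else 1)"
    and bS: "b \<in> S" and vb: "E v b" and vS: "v \<notin> S"
    and clo: "\<And>j k. j \<in> S \<Longrightarrow> E j k \<Longrightarrow> k \<in> S \<or> k = v"
  shows "(\<Sum>k\<in>S. A$i$k) = 0"
proof -
  have sym: "\<And>a b. E a b \<longleftrightarrow> E b a" and irr: "\<And>a. \<not> E a a"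
    using sg unfolding simple_graph_def by auto
  consider (inS) "i \<in> S" | (isv) "i = v" | (out) "i \<notin> S" "i \<noteq> v" by blast
  then show ?thesis
  proof cases
    case inS
    have iv: "i \<noteq> v" using inS vS by blast
    have "(\<Sum>k\<in>S. A$i$k) = A$i$i + (\<Sum>k\<in>S-{i}. A$i$k)"
      using inS by (simp add: sum.remove)
    also have "(\<Sum>k\<in>S-{i}. A$i$k) = (\<Sum>k\<in>S-{i}. if E i k then 1 else 0)"
    proof (rule sum.cong)
      fix k assume k: "k \<in> S - {i}"
      then have "k \<noteq> v" using vS by blast
      then show "A$i$k = (if E i k then 1 else 0)" using k iv one zero by auto
    qed simp
    also have "\<dots> = (\<Sum>k\<in>{k\<in>S-{i}. E i k}. (1::real))"
      by (rule sum.inter_filter[symmetric]) simp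
    also have "\<dots> = real (card {k\<in>S-{i}. E i k})"
      by simp
    also have "{k\<in>S-{i}. E i k} = {k. E i k \<and> k \<noteq> v}"
    proof -
      have "k \<in> S - {i}" if "E i k" "k \<noteq> v" for k
        using clo[OF inS that(1)] irr[of i] that by auto
      moreover have "k \<noteq> v" if "k \<in> S" for k using vS that by auto
      ultimately show ?thesis by blast
    qed
    finally show ?thesis using diag by simp
  next
    case isv
    let ?T = "{k\<in>S. E v k}"
    have bT: "b \<in> ?T" using bS vb by simp
    have "(\<Sum>k\<in>S. A$i$k) = (\<Sum>k\<in>S. if E v k then (if k = b then 1 - real (card ?T) else 1) else 0)"
    proof (rule sum.cong)
      fix k assume k: "k \<in> S"
      then have "k \<noteq> v" using vS by blast
      show "A$i$k = (if E v k then (if k = b then 1 - real (card ?T) else 1) else 0)"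
      proof (cases "E v k")
        case True
        then show ?thesis using vrow[OF k True] isv by simp
      next
        case False
        then show ?thesis using zero[of v k] isv \<open>k \<noteq> v\<close> by simp
      qed
    qed simp
    also have "\<dots> = (\<Sum>k\<in>?T. if k = b then 1 - real (card ?T) else 1)"
      by (rule sum.inter_filter[symmetric]) simp
    also have "\<dots> = (1 - real (card ?T)) + (\<Sum>k\<in>?T-{b}. if k = b then 1 - real (card ?T) else 1)"
      using bT by (simp add: sum.remove)
    also have "(\<Sum>k\<in>?T-{b}. if k = b then 1 - real (card ?T) else 1) = real (card (?T - {b}))"
    proof -
      have "(\<Sum>k\<in>?T-{b}. if k = b then 1 - real (card ?T) else 1) = (\<Sum>k\<in>?T-{b}. (1::real))"
        by (rule sum.cong) auto
      then show ?thesis by simp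
    qed
    also have "card (?T - {b}) = card ?T - 1" using bT by simp
    also have "real (card ?T - 1) = real (card ?T) - 1"
    proof -
      have "card ?T \<ge> 1" using bT card_gt_0_iff[of ?T] by auto
      then show ?thesis by (simp add: of_nat_diff)
    qed
    finally show ?thesis by simp
  next
    case out
    have "(\<Sum>k\<in>S. A$i$k) = (\<Sum>k\<in>S. 0)"
    proof (rule sum.cong)
      fix k assume k: "k \<in> S"
      have "i \<noteq> k" using k out by blast
      moreover have "\<not> E i k" using clo[OF k, of i] sym out by blast
      ultimately show "A$i$k = 0" using zero by blast
    qed simp
    then show ?thesis by simp
  qed
qed


lemma sum_ind:
  fixes f :: "'n::finite \<Rightarrow> real"
  shows "(\<Sum>k\<in>UNIV. f k * (if k \<in> T then 1 else 0)) = sum f T"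
proof -
  have "(\<Sum>k\<in>UNIV. f k * (if k \<in> T then 1 else 0)) = (\<Sum>k\<in>UNIV. if k \<in> T then f k else 0)"
    by (rule sum.cong) auto
  also have "\<dots> = sum f {k\<in>UNIV. k \<in> T}"
    by (rule sum.inter_filter[symmetric]) simp
  finally show ?thesis by simp
qed

lemma sum_ind2:
  fixes f :: "'n::finite \<Rightarrow> real"
  shows "(\<Sum>k\<in>UNIV. (if k \<in> T then 1 else 0) * f k) = sum f T"
  using sum_ind[of f T] by (simp add: mult.commute)

lemma not_GSSP:
  fixes E :: "'n::finite \<Rightarrow> 'n \<Rightarrow> bool"
  assumes sg: "simple_graph E"
    and disj: "S1 \<inter> S2 = {}" and v1: "v \<notin> S1" and v2: "v \<notin> S2"
    and clo1: "\<And>j k. j \<in> S1 \<Longrightarrow> E j k \<Longrightarrow> k \<in> S1 \<or> k = v"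
    and clo2: "\<And>j k. j \<in> S2 \<Longrightarrow> E j k \<Longrightarrow> k \<in> S2 \<or> k = v"
    and bS: "b \<in> S1" and vb: "E v b" and dS: "d \<in> S2" and vd: "E v d"
    and k1: "card {k\<in>S1. E v k} \<ge> 2" and k2: "card {k\<in>S2. E v k} \<ge> 2"
  shows "E \<notin> G_SSP"
proof
  assume EG: "E \<in> G_SSP"
  have sym: "\<And>a b. E a b \<longleftrightarrow> E b a" and irr: "\<And>a. \<not> E a a"
    using sg unfolding simple_graph_def by auto
  define c1 where "c1 = 1 - real (card {k\<in>S1. E v k})"
  define c2 where "c2 = 1 - real (card {k\<in>S2. E v k})"
  have c1nz: "c1 \<noteq> 0" using k1 unfolding c1_def by simp
  have c2nz: "c2 \<noteq> 0" using k2 unfolding c2_def by simp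
  define wt where "wt i j = (if {i,j} = {v,b} then c1
     else if {i,j} = {v,d} then c2 else 1)" for i j
  have wtnz: "wt i j \<noteq> 0" for i j using c1nz c2nz unfolding wt_def by auto
  have wtsym: "wt i j = wt j i" for i j unfolding wt_def by (simp add: insert_commute)
  define A :: "real^'n^'n" where
    "A = (\<chi> i j. if i = j then - real (card {k. E i k \<and> k \<noteq> v}) else if E i j then wt i j else 0)"
  define X :: "real^'n^'n" where
    "X = (\<chi> i j. if (i \<in> S1 \<and> j \<in> S2) \<or> (i \<in> S2 \<and> j \<in> S1) then 1 else 0)"
  have bd: "b \<noteq> d" using bS dS disj by blast
  have bv: "b \<noteq> v" and dv: "d \<noteq> v" using bS dS v1 v2 by auto
  have Asym: "A$i$j = A$j$i" for i j
    unfolding A_def using sym[of i j] wtsym[of i j] by (simp add: eq_commute[of i j])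
  have diag: "\<And>i. A$i$i = - real (card {k. E i k \<and> k \<noteq> v})" unfolding A_def by simp
  have zero: "\<And>i j. i \<noteq> j \<Longrightarrow> \<not> E i j \<Longrightarrow> A$i$j = 0" unfolding A_def by simp
  have one: "\<And>i j. i \<noteq> v \<Longrightarrow> j \<noteq> v \<Longrightarrow> i \<noteq> j \<Longrightarrow> E i j \<Longrightarrow> A$i$j = 1"
    unfolding A_def wt_def by (auto simp: doubleton_eq_iff)
  have vrow1: "A$v$k = (if k = b then 1 - real (card {k\<in>S1. E v k}) else 1)"
    if "k \<in> S1" "E v k" for k
  proof -
    have "k \<noteq> v" "k \<noteq> d" using that v1 dS disj by auto
    then show ?thesis using that unfolding A_def wt_def c1_def by (auto simp: doubleton_eq_iff)
  qed
  have vrow2: "A$v$k = (if k = d then 1 - real (card {k\<in>S2. E v k}) else 1)"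
    if "k \<in> S2" "E v k" for k
  proof -
    have "k \<noteq> v" "k \<noteq> b" using that v2 bS disj by auto
    then show ?thesis using that bd unfolding A_def wt_def c2_def by (auto simp: doubleton_eq_iff)
  qed
  have rs1: "(\<Sum>k\<in>S1. A$i$k) = 0" for i
    by (rule row_sum_zero[OF sg diag zero one vrow1 bS vb v1 clo1])
  have rs2: "(\<Sum>k\<in>S2. A$i$k) = 0" for i
    by (rule row_sum_zero[OF sg diag zero one vrow2 dS vd v2 clo2])
  have AS: "A \<in> S_graph E"
    unfolding S_graph_def
  proof (intro CollectI conjI allI impI)
    show "transpose A = A" using Asym by (simp add: vec_eq_iff transpose_def)
  next
    fix i j :: 'n assume "i \<noteq> j"
    then show "(A$i$j \<noteq> 0) = E i j" using wtnz unfolding A_def by simp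
  qed
  have Xcol: "(\<chi> k. X$k$j) = (\<chi> k. if k \<in> (if j \<in> S2 then S1 else if j \<in> S1 then S2 else {}) then 1 else 0)" for j
    unfolding X_def using disj by (auto simp: vec_eq_iff)
  have Xcol': "X$k$j = (if k \<in> (if j \<in> S2 then S1 else if j \<in> S1 then S2 else {}) then 1 else 0)" for k j
    using Xcol[of j] by (simp add: vec_eq_iff)
  have Xrow': "X$i$k = (if k \<in> (if i \<in> S1 then S2 else if i \<in> S2 then S1 else {}) then 1 else 0)" for k i
    unfolding X_def using disj by auto
  have AX: "A ** X = 0"
  proof -
    have "(\<Sum>k\<in>UNIV. A$i$k * X$k$j) = 0" for i j
      unfolding Xcol' sum_ind using rs1 rs2 by simp
    then show ?thesis by (simp add: matrix_matrix_mult_def vec_eq_iff)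
  qed
  have XA: "X ** A = 0"
  proof -
    have "(\<Sum>k\<in>UNIV. X$i$k * A$k$j) = 0" for i j
    proof -
      have "(\<Sum>k\<in>UNIV. X$i$k * A$k$j) = (\<Sum>k\<in>UNIV. X$i$k * A$j$k)"
        using Asym by simp
      also have "\<dots> = 0" unfolding Xrow' sum_ind2 using rs1 rs2 by simp
      finally show ?thesis .
    qed
    then show ?thesis by (simp add: matrix_matrix_mult_def vec_eq_iff)
  qed
  have "SSP A" using EG AS unfolding G_SSP_def by blast
  moreover have "transpose X = X" unfolding X_def by (auto simp: vec_eq_iff transpose_def)
  moreover have "\<forall>i j. A $ i $ j * X $ i $ j = 0"
  proof (intro allI)
    fix i j
    show "A $ i $ j * X $ i $ j = 0"
    proof (cases "(i \<in> S1 \<and> j \<in> S2) \<or> (i \<in> S2 \<and> j \<in> S1)")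
      case True
      then have "i \<noteq> j" using disj by blast
      moreover have "\<not> E i j" using True clo1 clo2 disj v1 v2 by blast
      ultimately show ?thesis using zero by simp
    next
      case False
      then have "X$i$j = 0" unfolding X_def by auto
      then show ?thesis by simp
    qed
  qed
  moreover have "\<forall>i. X $ i $ i = 0" unfolding X_def using disj by auto
  moreover have "A ** X - X ** A = 0" using AX XA by simp
  ultimately have "X = 0" unfolding SSP_def by blast
  moreover have "X$b$d = 1" unfolding X_def using bS dS by simp
  ultimately show False by simp
qed


lemma rG_sym: "simple_graph E \<Longrightarrow> rG E v a b \<Longrightarrow> rG E v b a"
  unfolding rG_def simple_graph_def by blast

lemma conn_sym:
  assumes sg: "simple_graph E" and c: "(rG E v)\<^sup>*\<^sup>* a b"
  shows "(rG E v)\<^sup>*\<^sup>* b a"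
  using c
proof (induction rule: rtranclp_induct)
  case base
  then show ?case by simp
next
  case (step y z)
  then show ?case using rG_sym[OF sg step(2)] by (simp add: converse_rtranclp_into_rtranclp)
qed

lemma conn_notv:
  assumes c: "(rG E v)\<^sup>*\<^sup>* x y" and "x \<noteq> v"
  shows "y \<noteq> v"
  using c assms(2) by (induction rule: rtranclp_induct) (auto simp: rG_def)

lemma conn_clo:
  assumes c: "(rG E v)\<^sup>*\<^sup>* x y" and "x \<noteq> v" and "E y k" and "k \<noteq> v"
  shows "(rG E v)\<^sup>*\<^sup>* x k"
proof -
  have "y \<noteq> v" using conn_notv[OF c assms(2)] .
  then have "rG E v y k" using assms unfolding rG_def by simp
  then show ?thesis using c by simp
qed

lemma get_cycle:
  fixes E :: "'n::finite \<Rightarrow> 'n \<Rightarrow> bool"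
  assumes sg: "simple_graph E" and vx: "E v x" and vy: "E v y" and xy: "x \<noteq> y"
    and c: "(rG E v)\<^sup>*\<^sup>* x y"
  obtains C where "C \<in> cycles_through E v" "{v,y} \<in> C" "\<forall>z. {v,z} \<in> C \<longrightarrow> z = x \<or> z = y"
proof -
  from c obtain xs where "rtrancl_path (rG E v) x xs y" unfolding rtranclp_eq_rtrancl_path by blast
  then obtain xs' where p: "rtrancl_path (rG E v) x xs' y" and d: "distinct (x # xs')"
    by (rule rtrancl_path_distinct)
  from cycle_from_path[OF sg vx vy xy p d]
  have h: "is_cycle E (cycle_edges (v#x#xs'))" "v \<in> \<Union>(cycle_edges (v#x#xs'))"
     "{v,y} \<in> cycle_edges (v#x#xs')"
     "\<forall>z. {v,z} \<in> cycle_edges (v#x#xs') \<longrightarrow> z = x \<or> z = y" by auto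
  show ?thesis
  proof (rule that)
    show "cycle_edges (v#x#xs') \<in> cycles_through E v" unfolding cycles_through_def using h(1,2) by simp
  qed (use h in auto)
qed

lemma two_cycles:
  fixes E :: "'n::finite \<Rightarrow> 'n \<Rightarrow> bool"
  assumes sg: "simple_graph E" and v1: "E v u1" and v2: "E v u2" and v3: "E v u3"
    and d: "distinct [u1,u2,u3]"
    and c2: "(rG E v)\<^sup>*\<^sup>* u1 u2" and c3: "(rG E v)\<^sup>*\<^sup>* u1 u3"
  shows "card (cycles_through E v) \<ge> 2"
proof -
  have n12: "u1 \<noteq> u2" and n13: "u1 \<noteq> u3" and n23: "u2 \<noteq> u3" using d by auto
  obtain C2 where C2: "C2 \<in> cycles_through E v" "{v,u2} \<in> C2" "\<forall>z. {v,z} \<in> C2 \<longrightarrow> z = u1 \<or> z = u2"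
    by (rule get_cycle[OF sg v1 v2 n12 c2])
  obtain C3 where C3: "C3 \<in> cycles_through E v" "{v,u3} \<in> C3" "\<forall>z. {v,z} \<in> C3 \<longrightarrow> z = u1 \<or> z = u3"
    by (rule get_cycle[OF sg v1 v3 n13 c3])
  have "C2 \<noteq> C3"
  proof
    assume "C2 = C3"
    then have "{v,u3} \<in> C2" using C3(2) by simp
    then have "u3 = u1 \<or> u3 = u2" using C2(3) by blast
    then show False using n13 n23 by blast
  qed
  then have "card {C2, C3} = 2" by simp
  moreover have "{C2, C3} \<subseteq> cycles_through E v" using C2 C3 by blast
  moreover have fin: "finite (cycles_through E v)" by (rule finite)
  ultimately show ?thesis using card_mono[OF fin] by metis
qed


lemma pair_case:
  fixes E :: "'n::finite \<Rightarrow> 'n \<Rightarrow> bool"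
  assumes sg: "simple_graph E" and va: "E v a" and vb: "E v b" and vc: "E v c" and vd: "E v d"
    and ab: "a \<noteq> b" and cd: "c \<noteq> d"
    and nac: "\<not> (rG E v)\<^sup>*\<^sup>* a c" and nad: "\<not> (rG E v)\<^sup>*\<^sup>* a d"
    and nbc: "\<not> (rG E v)\<^sup>*\<^sup>* b c" and nbd: "\<not> (rG E v)\<^sup>*\<^sup>* b d"
  shows "E \<notin> G_SSP"
proof -
  let ?c = "(rG E v)\<^sup>*\<^sup>*"
  have irr: "\<And>x. \<not> E x x" using sg unfolding simple_graph_def by auto
  have av: "a \<noteq> v" and bv: "b \<noteq> v" and cv: "c \<noteq> v" and dv: "d \<noteq> v"
    using va vb vc vd irr by auto
  define S1 where "S1 = {y. ?c a y} \<union> {y. ?c b y}"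
  define S2 where "S2 = {y. ?c c y} \<union> {y. ?c d y}"
  have cross: "\<not> (?c p z \<and> ?c q z)" if "p \<in> {a,b}" "q \<in> {c,d}" for p q z
  proof
    assume h: "?c p z \<and> ?c q z"
    then have "?c z q" using conn_sym[OF sg] by blast
    then have "?c p q" using h by (meson rtranclp_trans)
    then show False using that nac nad nbc nbd by blast
  qed
  have disj: "S1 \<inter> S2 = {}"
  proof -
    have "z \<notin> S1 \<or> z \<notin> S2" for z
    proof -
      have "\<not> (?c a z \<and> ?c c z)" "\<not> (?c a z \<and> ?c d z)" "\<not> (?c b z \<and> ?c c z)" "\<not> (?c b z \<and> ?c d z)"
        by (rule cross; simp)+
      then show ?thesis unfolding S1_def S2_def by blast
    qed
    then show ?thesis by blast
  qed
  have v1: "v \<notin> S1" unfolding S1_def using conn_notv[of E v a v] conn_notv[of E v b v] av bv by blast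
  have v2: "v \<notin> S2" unfolding S2_def using conn_notv[of E v c v] conn_notv[of E v d v] cv dv by blast
  have clo1: "k \<in> S1 \<or> k = v" if "j \<in> S1" "E j k" for j k
  proof (cases "k = v")
    case False
    from that(1) have "?c a j \<or> ?c b j" unfolding S1_def by simp
    then show ?thesis using conn_clo[of E v a j k] conn_clo[of E v b j k] av bv False that(2)
      unfolding S1_def by blast
  qed simp
  have clo2: "k \<in> S2 \<or> k = v" if "j \<in> S2" "E j k" for j k
  proof (cases "k = v")
    case False
    from that(1) have "?c c j \<or> ?c d j" unfolding S2_def by simp
    then show ?thesis using conn_clo[of E v c j k] conn_clo[of E v d j k] cv dv False that(2)
      unfolding S2_def by blast
  qed simp
  have aS: "a \<in> S1" and bS: "b \<in> S1" unfolding S1_def by auto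
  have cS: "c \<in> S2" and dS: "d \<in> S2" unfolding S2_def by auto
  have k1: "card {k\<in>S1. E v k} \<ge> 2"
  proof -
    have "{a,b} \<subseteq> {k\<in>S1. E v k}" using aS bS va vb by blast
    then have "card {a,b} \<le> card {k\<in>S1. E v k}" by (rule card_mono[OF finite])
    then show ?thesis using ab by simp
  qed
  have k2: "card {k\<in>S2. E v k} \<ge> 2"
  proof -
    have "{c,d} \<subseteq> {k\<in>S2. E v k}" using cS dS vc vd by blast
    then have "card {c,d} \<le> card {k\<in>S2. E v k}" by (rule card_mono[OF finite])
    then show ?thesis using cd by simp
  qed
  show ?thesis
    by (rule not_GSSP[OF sg disj v1 v2 clo1 clo2 bS vb dS vd k1 k2])
qed

lemma four_elems:
  assumes "4 \<le> card A"
  shows "\<exists>a b c d. a \<in> A \<and> b \<in> A \<and> c \<in> A \<and> d \<in> A \<and> distinct [a,b,c,d]"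
proof -
  have "Suc 3 \<le> card A" using assms by simp
  from card_le_Suc_iff[THEN iffD1, OF this]
  obtain a B where 1: "A = insert a B" "a \<notin> B" "3 \<le> card B" by blast
  have "Suc 2 \<le> card B" using 1(3) by simp
  from card_le_Suc_iff[THEN iffD1, OF this]
  obtain b C where 2: "B = insert b C" "b \<notin> C" "2 \<le> card C" by blast
  have "Suc 1 \<le> card C" using 2(3) by simp
  from card_le_Suc_iff[THEN iffD1, OF this]
  obtain c D where 3: "C = insert c D" "c \<notin> D" "1 \<le> card D" by blast
  have "Suc 0 \<le> card D" using 3(3) by simp
  from card_le_Suc_iff[THEN iffD1, OF this]
  obtain d F where 4: "D = insert d F" "d \<notin> F" by blast
  have "a \<in> A \<and> b \<in> A \<and> c \<in> A \<and> d \<in> A \<and> distinct [a,b,c,d]"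
    using 1(1,2) 2(1,2) 3(1,2) 4 by auto
  then show ?thesis by blast
qed

theorem corollary2p7:
  fixes E :: "'n::finite \<Rightarrow> 'n \<Rightarrow> bool" and v :: 'n
  assumes "simple_graph E"
    and "degree E v \<ge> 4"
    and "card (cycles_through E v) \<le> 1"
  shows "E \<notin> G_SSP"
proof -
  note sg = assms(1)
  let ?c = "(rG E v)\<^sup>*\<^sup>*"
  have c4: "4 \<le> card {u. E v u}" using assms(2) unfolding degree_def .
  have "\<exists>u1 u2 u3 u4. E v u1 \<and> E v u2 \<and> E v u3 \<and> E v u4 \<and> distinct [u1,u2,u3,u4]"
    using four_elems[OF c4] by simp
  then obtain u1 u2 u3 u4 where U: "E v u1" "E v u2" "E v u3" "E v u4"
    and D: "distinct [u1,u2,u3,u4]" by blast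
  have csym: "\<And>x y. ?c x y \<Longrightarrow> ?c y x" using conn_sym[OF sg] by blast
  have ctr: "\<And>x y z. ?c x y \<Longrightarrow> ?c y z \<Longrightarrow> ?c x z" by (meson rtranclp_trans)
  have no3: False if "p \<in> {u1,u2,u3,u4}" "q \<in> {u1,u2,u3,u4}" "r \<in> {u1,u2,u3,u4}"
    "distinct [p,q,r]" "?c p q" "?c p r" for p q r
  proof -
    have "E v p" "E v q" "E v r" using that(1-3) U by auto
    from two_cycles[OF sg this that(4-6)] show False using assms(3) by simp
  qed
  have pc: "E \<notin> G_SSP" if "a \<in> {u1,u2,u3,u4}" "b \<in> {u1,u2,u3,u4}" "c \<in> {u1,u2,u3,u4}"
    "d \<in> {u1,u2,u3,u4}" "a \<noteq> b" "c \<noteq> d"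
    "\<not> ?c a c" "\<not> ?c a d" "\<not> ?c b c" "\<not> ?c b d" for a b c d
  proof -
    have "E v a" "E v b" "E v c" "E v d" using that(1-4) U by auto
    then show ?thesis using pair_case[OF sg] that(5-10) by blast
  qed
  have n3: "\<not> ?c p r \<and> \<not> ?c q r" if "p \<in> {u1,u2,u3,u4}" "q \<in> {u1,u2,u3,u4}" "r \<in> {u1,u2,u3,u4}"
    "distinct [p,q,r]" "?c p q" for p q r
  proof
    show "\<not> ?c p r" using no3[OF that(1-5)] by blast
    show "\<not> ?c q r"
    proof
      assume "?c q r"
      then have "?c p r" using ctr that(5) by blast
      then show False using no3[OF that(1-5)] by blast
    qed
  qed
  have U4: "u1 \<in> {u1,u2,u3,u4}" "u2 \<in> {u1,u2,u3,u4}" "u3 \<in> {u1,u2,u3,u4}" "u4 \<in> {u1,u2,u3,u4}"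
    by auto
  show ?thesis
  proof (cases "?c u1 u2")
    case True
    have "\<not> ?c u1 u3 \<and> \<not> ?c u2 u3" using n3[OF U4(1,2,3) _ True] D by auto
    moreover have "\<not> ?c u1 u4 \<and> \<not> ?c u2 u4" using n3[OF U4(1,2,4) _ True] D by auto
    ultimately show ?thesis using pc[OF U4(1,2,3,4)] D by simp
  next
    case n12: False
    show ?thesis
    proof (cases "?c u1 u3")
      case True
      have "\<not> ?c u1 u2 \<and> \<not> ?c u3 u2" using n3[OF U4(1,3,2) _ True] D by auto
      moreover have "\<not> ?c u1 u4 \<and> \<not> ?c u3 u4" using n3[OF U4(1,3,4) _ True] D by auto
      ultimately show ?thesis using pc[OF U4(1,3,2,4)] D by simp
    next
      case n13: False
      show ?thesis
      proof (cases "?c u1 u4")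
        case True
        have "\<not> ?c u1 u2 \<and> \<not> ?c u4 u2" using n3[OF U4(1,4,2) _ True] D by auto
        moreover have "\<not> ?c u1 u3 \<and> \<not> ?c u4 u3" using n3[OF U4(1,4,3) _ True] D by auto
        ultimately show ?thesis using pc[OF U4(1,4,2,3)] D by simp
      next
        case n14: False
        have n21: "\<not> ?c u2 u1" using n12 csym by blast
        have n31: "\<not> ?c u3 u1" using n13 csym by blast
        have n41: "\<not> ?c u4 u1" using n14 csym by blast
        show ?thesis
        proof (cases "?c u2 u3")
          case True
          have "\<not> ?c u2 u4 \<and> \<not> ?c u3 u4" using n3[OF U4(2,3,4) _ True] D by auto
          then show ?thesis using pc[OF U4(2,3,1,4)] D n21 n31 by simp
        next
          case n23: False
          show ?thesis
          proof (cases "?c u2 u4")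
            case True
            have "\<not> ?c u2 u3 \<and> \<not> ?c u4 u3" using n3[OF U4(2,4,3) _ True] D by auto
            then show ?thesis using pc[OF U4(2,4,1,3)] D n21 n41 by simp
          next
            case n24: False
            then show ?thesis using pc[OF U4(1,2,3,4)] D n13 n14 n23 by simp
          qed
        qed
      qed
    qed
  qed
qed

end
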